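(* Let $T\subset\mathbb{R}^3$ be a tetrahedron with vertices $x_1,\dots,x_4$, barycentre $x_T=\frac14\sum_{i=1}^4x_i$, and let $F_i$ be the face opposite $x_i$. Set $L:=\sum_{i=1}^4|x_i-x_T|^2$ and $\varphi_T(x):=L-12|x-x_T|^2$ for $x\in T$. Then $$\frac{1}{|F_i|}\int_{F_i}\varphi_T\,ds=0\ (i=1,2,3,4),\qquad \frac{1}{|T|}\int_T\varphi_T\,dx=\frac25L,\qquad \frac{1}{|T|}\int_T|\nabla\varphi_T|^2\,dx=\frac{144}{5}L.$$
   Context: $|F_i|$ is the area of $F_i$, $|T|$ the volume of $T$, and $|\cdot|$ the Euclidean norm. *)

theory Defs
  imports "HOL-Analysis.Analysis" "HOL-Analysis.Cross3"
begin

definition ref_triangle :: "(real^2) set" where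
  "ref_triangle = {p. 0 \<le> p$1 \<and> 0 \<le> p$2 \<and> p$1 + p$2 \<le> 1}"

definition tri_area :: "real^3 \<Rightarrow> real^3 \<Rightarrow> real^3 \<Rightarrow> real" where
  "tri_area a b c = norm (cross3 (b - a) (c - a)) / 2"

text \<open>Surface integral of f over the flat triangle conv{a,b,c}, computed through the
  affine parametrisation p |-> a + p1 (b-a) + p2 (c-a) (constant surface element).\<close>
definition tri_surface_integral :: "(real^3 \<Rightarrow> real) \<Rightarrow> real^3 \<Rightarrow> real^3 \<Rightarrow> real^3 \<Rightarrow> real" where
  "tri_surface_integral f a b c =
     integral ref_triangle (\<lambda>p. f (a + (p$1) *\<^sub>R (b - a) + (p$2) *\<^sub>R (c - a)))
       * norm (cross3 (b - a) (c - a))"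

definition grad :: "(real^3 \<Rightarrow> real) \<Rightarrow> real^3 \<Rightarrow> real^3" where
  "grad f x = (\<chi> i. frechet_derivative f (at x) (axis i 1))"

end

theory Submission imports Defs begin

lemma Basis3: "(Basis :: (real^3) set) = {axis 1 1, axis 2 1, axis 3 1}"
  apply (auto simp: Basis_vec_def)
  subgoal for x using exhaust_3[of x] by auto
  done
lemma Basis2: "(Basis :: (real^2) set) = {axis 1 1, axis 2 1}"
  apply (auto simp: Basis_vec_def)
  subgoal for x using exhaust_2[of x] by auto
  done
lemma prod_Basis3: "(\<Prod>b\<in>(Basis::(real^3) set). f b) = f (axis 1 1) * f (axis 2 1) * f (axis 3 1)"
  unfolding Basis3 by (simp add: axis_eq_axis mult.assoc)
lemma prod_Basis2: "(\<Prod>b\<in>(Basis::(real^2) set). f b) = f (axis 1 1) * f (axis 2 1)"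
  unfolding Basis2 by (simp add: axis_eq_axis)
lemma sum_Basis3: "(\<Sum>b\<in>(Basis::(real^3) set). f b) = f (axis 1 1) + f (axis 2 1) + f (axis 3 1)"
  unfolding Basis3 by (simp add: axis_eq_axis add.assoc)
lemma sum_Basis2: "(\<Sum>b\<in>(Basis::(real^2) set). f b) = f (axis 1 1) + f (axis 2 1)"
  unfolding Basis2 by (simp add: axis_eq_axis)

definition e3 :: "real \<times> real \<times> real \<Rightarrow> real^3" where
  "e3 p = fst p *\<^sub>R axis 1 1 + fst (snd p) *\<^sub>R axis 2 1 + snd (snd p) *\<^sub>R axis 3 1"

lemma e3_comp[simp]: "e3 (a,b,c) $ 1 = a" "e3 (a,b,c) $ 2 = b" "e3 (a,b,c) $ 3 = c"
  by (simp_all add: e3_def axis_def)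

lemma e3_meas[measurable]: "e3 \<in> borel_measurable borel"
proof -
  have "continuous_on UNIV e3"
    unfolding e3_def by (intro continuous_intros)
  then show ?thesis by (rule borel_measurable_continuous_onI)
qed

lemma emeasure_lborel_Times:
  fixes A :: "'a::euclidean_space set" and B :: "'b::euclidean_space set"
  assumes "A \<in> sets borel" "B \<in> sets borel"
  shows "emeasure lborel (A \<times> B) = emeasure lborel A * emeasure lborel B"
proof -
  have "emeasure (lborel \<Otimes>\<^sub>M lborel) (A \<times> B) = emeasure lborel A * emeasure lborel B"
    by (rule lborel.emeasure_pair_measure_Times) (use assms in auto)
  then show ?thesis by (simp only: lborel_prod)
qed

lemma lborel_e3: "lborel = distr lborel borel e3"
proof (rule lborel_eqI)
  fix l u :: "real^3"
  assume le: "\<And>b. b \<in> Basis \<Longrightarrow> l \<bullet> b \<le> u \<bullet> b"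
  then have le': "l$i \<le> u$i" for i
    using le[of "axis i 1"] by (simp add: inner_axis)
  have pre: "e3 -` box l u = {l$1<..<u$1} \<times> ({l$2<..<u$2} \<times> {l$3<..<u$3})"
    by (auto simp: box_def Basis3 inner_axis)
  have "emeasure (distr lborel borel e3) (box l u) = emeasure lborel ({l$1<..<u$1} \<times> ({l$2<..<u$2} \<times> {l$3<..<u$3}))"
    by (subst emeasure_distr) (auto simp: pre)
  also have "\<dots> = emeasure lborel {l$1<..<u$1} * emeasure lborel ({l$2<..<u$2} \<times> {l$3<..<u$3})"
    by (rule emeasure_lborel_Times) (auto intro!: borel_open open_Times)
  also have "emeasure lborel ({l$2<..<u$2} \<times> {l$3<..<u$3}) = emeasure lborel {l$2<..<u$2} * emeasure lborel {l$3<..<u$3}"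
    by (rule emeasure_lborel_Times) auto
  also have "emeasure lborel {l$1<..<u$1} * (emeasure lborel {l$2<..<u$2} * emeasure lborel {l$3<..<u$3})
     = ennreal (u$1 - l$1) * (ennreal (u$2 - l$2) * ennreal (u$3 - l$3))"
    using le' by simp
  also have "\<dots> = (\<Prod>b\<in>Basis. (u - l) \<bullet> b)"
    using le' by (simp add: prod_Basis3 inner_axis ennreal_mult mult.assoc)
  finally show "emeasure (distr lborel borel e3) (box l u) = (\<Prod>b\<in>Basis. (u - l) \<bullet> b)" .
qed simp
lemma nn_integral_lborel_pair:
  fixes f :: "('a::euclidean_space \<times> 'b::euclidean_space) \<Rightarrow> ennreal"
  assumes "f \<in> borel_measurable borel"
  shows "(\<integral>\<^sup>+p. f p \<partial>lborel) = (\<integral>\<^sup>+x. \<integral>\<^sup>+y. f (x,y) \<partial>lborel \<partial>lborel)"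
proof -
  have "(\<integral>\<^sup>+x. \<integral>\<^sup>+y. f (x,y) \<partial>lborel \<partial>lborel) = integral\<^sup>N (lborel \<Otimes>\<^sub>M lborel) f"
    by (rule lborel.nn_integral_fst) (use assms in \<open>simp add: borel_prod[symmetric]\<close>)
  then show ?thesis by (simp only: lborel_prod)
qed

lemma nn_e3:
  fixes f :: "real^3 \<Rightarrow> ennreal"
  assumes [measurable]: "f \<in> borel_measurable borel"
  shows "(\<integral>\<^sup>+x. f x \<partial>lborel) = (\<integral>\<^sup>+a. \<integral>\<^sup>+b. \<integral>\<^sup>+c. f (e3 (a,b,c)) \<partial>lborel \<partial>lborel \<partial>lborel)"
proof -
  have "(\<integral>\<^sup>+x. f x \<partial>lborel) = (\<integral>\<^sup>+x. f x \<partial>(distr lborel borel e3))"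
    using lborel_e3 by metis
  also have "\<dots> = (\<integral>\<^sup>+p. f (e3 p) \<partial>lborel)"
    by (subst nn_integral_distr) auto
  also have "\<dots> = (\<integral>\<^sup>+a. \<integral>\<^sup>+q. f (e3 (a,q)) \<partial>lborel \<partial>lborel)"
    by (rule nn_integral_lborel_pair) measurable
  also have "\<dots> = (\<integral>\<^sup>+a. \<integral>\<^sup>+b. \<integral>\<^sup>+c. f (e3 (a,b,c)) \<partial>lborel \<partial>lborel \<partial>lborel)"
    by (intro nn_integral_cong nn_integral_lborel_pair) measurable
  finally show ?thesis .
qed
lemma beta_hk:
  fixes t :: real
  assumes "0 \<le> t"
  shows "((\<lambda>b. b^j * (t-b)^m) has_integral (fact j * fact m / fact (j+m+1) * t^(j+m+1))) {0..t}"
  using assms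
proof (induction m arbitrary: j)
  case 0
  have "((\<lambda>b. b^j) has_integral ((\<lambda>b. b^(Suc j)/real (Suc j)) t - (\<lambda>b. b^(Suc j)/real (Suc j)) 0)) {0..t}"
    apply (rule fundamental_theorem_of_calculus)
    using 0 apply simp
    unfolding has_real_derivative_iff_has_vector_derivative[symmetric]
    apply (auto intro!: derivative_eq_intros simp del: of_nat_Suc)
    apply (cases j) by (auto simp: field_simps)
  moreover have "fact j * fact 0 / fact (j+0+1) * t^(j+0+1) = t^(Suc j)/real (Suc j)"
  proof -
    have "(fact j::real) > 0" by simp
    then show ?thesis by (simp add: field_simps del: of_nat_Suc)
  qed
  ultimately show ?case by simp
next
  case (Suc m)
  note h1 = Suc.IH[of j, OF Suc.prems]
  note h2 = Suc.IH[of "Suc j", OF Suc.prems]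
  have "((\<lambda>b. t * (b^j * (t-b)^m) - b^(Suc j) * (t-b)^m) has_integral
     (t * (fact j * fact m / fact (j+m+1) * t^(j+m+1)) - fact (Suc j) * fact m / fact (Suc j+m+1) * t^(Suc j+m+1))) {0..t}"
    by (intro has_integral_diff has_integral_mult_right h1 h2)
  moreover have "(\<lambda>b. t * (b^j * (t-b)^m) - b^(Suc j) * (t-b)^m) = (\<lambda>b. b^j * (t-b)^Suc m)"
    by (auto simp: algebra_simps)
  moreover have "t * (fact j * fact m / fact (j+m+1) * t^(j+m+1)) - fact (Suc j) * fact m / fact (Suc j+m+1) * t^(Suc j+m+1)
     = fact j * fact (Suc m) / fact (j+Suc m+1) * t^(j+Suc m+1)"
  proof -
    have key: "\<And>A B F P (jj::real) mm. F > 0 \<Longrightarrow> jj \<ge> 0 \<Longrightarrow> mm \<ge> 0 \<Longrightarrow>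
       t*(A*B/F*P) - ((jj+1)*A)*B/((jj+mm+2)*F)*(t*P) = A*((mm+1)*B)/((jj+mm+2)*F)*(t*P)"
    proof -
      fix A B F P jj mm :: real
      assume "F > 0" "jj \<ge> 0" "mm \<ge> 0"
      then have "F \<noteq> 0" "jj+mm+2 \<noteq> 0" by auto
      then show "t*(A*B/F*P) - ((jj+1)*A)*B/((jj+mm+2)*F)*(t*P) = A*((mm+1)*B)/((jj+mm+2)*F)*(t*P)"
      proof -
        define Q where "Q = A*B*(t*P)/((jj+mm+2)*F)"
        have 1: "t*(A*B/F*P) = (jj+mm+2)*Q" unfolding Q_def using \<open>jj+mm+2 \<noteq> 0\<close> by simp
        have 2: "((jj+1)*A)*B/((jj+mm+2)*F)*(t*P) = (jj+1)*Q" unfolding Q_def by simp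
        have 3: "A*((mm+1)*B)/((jj+mm+2)*F)*(t*P) = (mm+1)*Q" unfolding Q_def by simp
        show ?thesis unfolding 1 2 3 by (simp add: algebra_simps)
      qed
    qed
    have e1: "(fact (Suc j)::real) = (real j + 1) * fact j" by simp
    have e2: "(fact (Suc m)::real) = (real m + 1) * fact m" by simp
    have e3: "(fact (Suc j+m+1)::real) = (real j + real m + 2) * fact (j+m+1)"
      "(fact (j+Suc m+1)::real) = (real j + real m + 2) * fact (j+m+1)"
      by (simp_all add: algebra_simps)
    have e4: "t^(Suc j+m+1) = t * t^(j+m+1)" "t^(j+Suc m+1) = t * t^(j+m+1)" by simp_all
    show ?thesis unfolding e1 e2 e3 e4 by (rule key) auto
  qed
  ultimately show ?case by simp
qed

definition "betaC j m = (fact j * fact m / fact (j+m+1) :: real)"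

lemma betaC_pos: "betaC j m > 0" unfolding betaC_def by simp

lemma beta_nn:
  fixes t C :: real
  assumes "0 \<le> C"
  shows "(\<integral>\<^sup>+b. ennreal (C * (indicator {0..t} b * (b^j*(t-b)^m))) \<partial>lborel)
     = ennreal (C * (if 0 \<le> t then betaC j m * t^(j+m+1) else 0))"
proof (cases "0 \<le> t")
  case True
  have "(\<integral>\<^sup>+b. ennreal (C * (indicator {0..t} b * (b^j*(t-b)^m))) \<partial>lborel)
      = (\<integral>\<^sup>+b. ennreal C * ennreal (indicator {0..t} b * (b^j*(t-b)^m)) \<partial>lborel)"
    by (intro nn_integral_cong) (use assms in \<open>auto simp: ennreal_mult indicator_def\<close>)
  also have "\<dots> = ennreal C * (\<integral>\<^sup>+b. ennreal (indicator {0..t} b * (b^j*(t-b)^m)) \<partial>lborel)"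
    by (rule nn_integral_cmult) measurable
  also have "(\<integral>\<^sup>+b. ennreal (indicator {0..t} b * (b^j*(t-b)^m)) \<partial>lborel) = ennreal (betaC j m * t^(j+m+1))"
    by (rule nn_integral_has_integral_lebesgue) (use beta_hk[OF True] in \<open>auto simp: betaC_def\<close>)
  moreover have "0 \<le> betaC j m * t^(j+m+1)" using True less_imp_le[OF betaC_pos[of j m]] by simp
  ultimately show ?thesis using True assms by (simp add: ennreal_mult)
next
  case False
  then have "indicator {0..t} b = (0::real)" for b by auto
  then show ?thesis using False by simp
qed

definition "S3 = {p::real^3. 0 \<le> p$1 \<and> 0 \<le> p$2 \<and> 0 \<le> p$3 \<and> p$1+p$2+p$3 \<le> 1}"

lemma S3_closed: "closed S3"
  unfolding S3_def
  by (intro closed_Collect_conj closed_Collect_le continuous_intros)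

lemma mono3_nn:
  "(\<integral>\<^sup>+x. ennreal (indicator S3 x * (x$1^i * x$2^j * x$3^k)) \<partial>lborel)
     = ennreal (fact i * fact j * fact k / fact (i+j+k+3))"
proof -
  have [measurable]: "S3 \<in> sets borel" using S3_closed by (rule borel_closed)
  have "(\<integral>\<^sup>+x. ennreal (indicator S3 x * (x$1^i * x$2^j * x$3^k)) \<partial>lborel)
     = (\<integral>\<^sup>+a. \<integral>\<^sup>+b. \<integral>\<^sup>+c. ennreal (indicator S3 (e3 (a,b,c)) * (e3 (a,b,c)$1^i * e3 (a,b,c)$2^j * e3 (a,b,c)$3^k)) \<partial>lborel \<partial>lborel \<partial>lborel)"
    by (rule nn_e3) measurable
  also have "\<dots> = (\<integral>\<^sup>+a. \<integral>\<^sup>+b. \<integral>\<^sup>+c. ennreal ((indicator {0..1} a * a^i) * (indicator {0..1-a} b * b^j) * (indicator {0..1-a-b} c * (c^k * (1-a-b-c)^0))) \<partial>lborel \<partial>lborel \<partial>lborel)"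
    by (intro nn_integral_cong) (auto simp: S3_def indicator_def)
  also have "\<dots> = (\<integral>\<^sup>+a. \<integral>\<^sup>+b. ennreal ((indicator {0..1} a * a^i) * (indicator {0..1-a} b * b^j) * (if 0 \<le> 1-a-b then betaC k 0 * (1-a-b)^(k+0+1) else 0)) \<partial>lborel \<partial>lborel)"
    by (intro nn_integral_cong beta_nn) (auto simp: indicator_def)
  also have "\<dots> = (\<integral>\<^sup>+a. \<integral>\<^sup>+b. ennreal ((indicator {0..1} a * a^i * betaC k 0) * (indicator {0..1-a} b * (b^j * ((1-a)-b)^(k+1)))) \<partial>lborel \<partial>lborel)"
    by (intro nn_integral_cong) (auto simp: indicator_def mult_ac)
  also have "\<dots> = (\<integral>\<^sup>+a. ennreal ((indicator {0..1} a * a^i * betaC k 0) * (if 0 \<le> 1-a then betaC j (k+1) * (1-a)^(j+(k+1)+1) else 0)) \<partial>lborel)"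
    by (intro nn_integral_cong beta_nn) (auto simp: indicator_def less_imp_le[OF betaC_pos])
  also have "\<dots> = (\<integral>\<^sup>+a. ennreal ((betaC k 0 * betaC j (k+1)) * (indicator {0..1} a * (a^i * (1-a)^(j+k+2)))) \<partial>lborel)"
    by (intro nn_integral_cong) (auto simp: indicator_def mult_ac)
  also have "\<dots> = ennreal ((betaC k 0 * betaC j (k+1)) * betaC i (j+k+2))"
    using beta_nn[of "betaC k 0 * betaC j (k+1)" 1 i "j+k+2"] less_imp_le[OF betaC_pos] by simp
  also have "(betaC k 0 * betaC j (k+1)) * betaC i (j+k+2) = fact i * fact j * fact k / fact (i+j+k+3)"
  proof -
    have e: "k+0+1 = k+1" "j+(k+1)+1 = j+k+2" "i+(j+k+2)+1 = i+j+k+3" by simp_all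
    have p: "(fact (k+1)::real) \<noteq> 0" "(fact (j+k+2)::real) \<noteq> 0" "(fact (i+j+k+3)::real) \<noteq> 0" by simp_all
    show ?thesis unfolding betaC_def e using p
      by (simp only: fact_0 mult_1_right divide_inverse) (simp add: field_simps del: fact_Suc)
  qed
  finally show ?thesis .
qed

lemma cc_int:
  fixes f :: "'a::euclidean_space \<Rightarrow> real"
  assumes "compact S" "continuous_on S f"
  shows "f absolutely_integrable_on S"
proof -
  have m: "(\<lambda>x. indicator S x *\<^sub>R f x) \<in> lborel \<rightarrow>\<^sub>M borel"
    using borel_measurable_continuous_on_indicator[OF borel_compact[OF assms(1)] assms(2)] by simp
  have "integrable lborel (\<lambda>x. indicator S x *\<^sub>R f x)"
    by (rule borel_integrable_compact[OF assms])
  then have "integrable lebesgue (\<lambda>x. indicator S x *\<^sub>R f x)"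
    using integrable_completion[OF m] by simp
  then show ?thesis by (simp add: set_integrable_def)
qed

lemma nn_to_hk:
  fixes f :: "'a::euclidean_space \<Rightarrow> real"
  assumes "compact S" "continuous_on S f" "\<And>x. x \<in> S \<Longrightarrow> 0 \<le> f x" "0 \<le> v"
    and "(\<integral>\<^sup>+x. ennreal (indicator S x * f x) \<partial>lborel) = ennreal v"
  shows "(f has_integral v) S"
proof -
  have "f integrable_on S" using cc_int[OF assms(1,2)] set_lebesgue_integral_eq_integral(1) by blast
  then have hi: "(f has_integral integral S f) S" by (rule integrable_integral)
  have "(\<integral>\<^sup>+x. ennreal (indicator S x * f x) \<partial>lborel) = ennreal (integral S f)"
    by (rule nn_integral_has_integral_lebesgue[OF assms(3) hi])
  with assms(5) have "ennreal (integral S f) = ennreal v" by simp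
  moreover have "0 \<le> integral S f" using integral_nonneg[OF \<open>f integrable_on S\<close> assms(3)] by simp
  ultimately have "integral S f = v" using assms(4) by simp
  with hi show ?thesis by simp
qed

lemma S3_compact: "compact S3"
proof -
  have "S3 \<subseteq> cbox 0 1"
    by (auto simp: S3_def mem_box Basis3 inner_axis)
  then show ?thesis using S3_closed bounded_cbox bounded_subset compact_eq_bounded_closed by blast
qed

lemma mono3:
  "((\<lambda>x. x$1^i * x$2^j * x$3^k) has_integral (fact i * fact j * fact k / fact (i+j+k+3))) S3"
  by (rule nn_to_hk[OF S3_compact _ _ _ mono3_nn]) (auto simp: S3_def intro!: continuous_intros)

definition e2 :: "real \<times> real \<Rightarrow> real^2" where
  "e2 p = fst p *\<^sub>R axis 1 1 + snd p *\<^sub>R axis 2 1"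

lemma e2_comp[simp]: "e2 (a,b) $ 1 = a" "e2 (a,b) $ 2 = b"
  by (simp_all add: e2_def axis_def)

lemma e2_meas[measurable]: "e2 \<in> borel_measurable borel"
proof -
  have "continuous_on UNIV e2"
    unfolding e2_def by (intro continuous_intros)
  then show ?thesis by (rule borel_measurable_continuous_onI)
qed

lemma lborel_e2: "lborel = distr lborel borel e2"
proof (rule lborel_eqI)
  fix l u :: "real^2"
  assume le: "\<And>b. b \<in> Basis \<Longrightarrow> l \<bullet> b \<le> u \<bullet> b"
  then have le': "l$i \<le> u$i" for i
    using le[of "axis i 1"] by (simp add: inner_axis)
  have pre: "e2 -` box l u = {l$1<..<u$1} \<times> {l$2<..<u$2}"
    by (auto simp: box_def Basis2 inner_axis)
  have "emeasure (distr lborel borel e2) (box l u) = emeasure lborel ({l$1<..<u$1} \<times> {l$2<..<u$2})"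
    by (subst emeasure_distr) (auto simp: pre)
  also have "\<dots> = emeasure lborel {l$1<..<u$1} * emeasure lborel {l$2<..<u$2}"
    by (rule emeasure_lborel_Times) auto
  also have "\<dots> = ennreal (u$1 - l$1) * ennreal (u$2 - l$2)"
    using le' by simp
  also have "\<dots> = (\<Prod>b\<in>Basis. (u - l) \<bullet> b)"
    using le' by (simp add: prod_Basis2 inner_axis ennreal_mult)
  finally show "emeasure (distr lborel borel e2) (box l u) = (\<Prod>b\<in>Basis. (u - l) \<bullet> b)" .
qed simp

lemma nn_e2:
  fixes f :: "real^2 \<Rightarrow> ennreal"
  assumes [measurable]: "f \<in> borel_measurable borel"
  shows "(\<integral>\<^sup>+x. f x \<partial>lborel) = (\<integral>\<^sup>+a. \<integral>\<^sup>+b. f (e2 (a,b)) \<partial>lborel \<partial>lborel)"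
proof -
  have "(\<integral>\<^sup>+x. f x \<partial>lborel) = (\<integral>\<^sup>+x. f x \<partial>(distr lborel borel e2))"
    using lborel_e2 by metis
  also have "\<dots> = (\<integral>\<^sup>+p. f (e2 p) \<partial>lborel)"
    by (subst nn_integral_distr) auto
  also have "\<dots> = (\<integral>\<^sup>+a. \<integral>\<^sup>+b. f (e2 (a,b)) \<partial>lborel \<partial>lborel)"
    by (rule nn_integral_lborel_pair) measurable
  finally show ?thesis .
qed

definition "S2T = {p::real^2. 0 \<le> p$1 \<and> 0 \<le> p$2 \<and> p$1+p$2 \<le> 1}"

lemma S2T_closed: "closed S2T"
  unfolding S2T_def
  by (intro closed_Collect_conj closed_Collect_le continuous_intros)

lemma S2T_compact: "compact S2T"
proof -
  have "S2T \<subseteq> cbox 0 1"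
    by (auto simp: S2T_def mem_box Basis2 inner_axis)
  then show ?thesis using S2T_closed bounded_cbox bounded_subset compact_eq_bounded_closed by blast
qed

lemma mono2_nn:
  "(\<integral>\<^sup>+x. ennreal (indicator S2T x * (x$1^i * x$2^j)) \<partial>lborel)
     = ennreal (fact i * fact j / fact (i+j+2))"
proof -
  have [measurable]: "S2T \<in> sets borel" using S2T_closed by (rule borel_closed)
  have "(\<integral>\<^sup>+x. ennreal (indicator S2T x * (x$1^i * x$2^j)) \<partial>lborel)
     = (\<integral>\<^sup>+a. \<integral>\<^sup>+b. ennreal (indicator S2T (e2 (a,b)) * (e2 (a,b)$1^i * e2 (a,b)$2^j)) \<partial>lborel \<partial>lborel)"
    by (rule nn_e2) measurable
  also have "\<dots> = (\<integral>\<^sup>+a. \<integral>\<^sup>+b. ennreal ((indicator {0..1} a * a^i) * (indicator {0..1-a} b * (b^j * (1-a-b)^0))) \<partial>lborel \<partial>lborel)"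
    by (intro nn_integral_cong) (auto simp: S2T_def indicator_def)
  also have "\<dots> = (\<integral>\<^sup>+a. ennreal ((indicator {0..1} a * a^i) * (if 0 \<le> 1-a then betaC j 0 * (1-a)^(j+0+1) else 0)) \<partial>lborel)"
    by (intro nn_integral_cong beta_nn) (auto simp: indicator_def)
  also have "\<dots> = (\<integral>\<^sup>+a. ennreal (betaC j 0 * (indicator {0..1} a * (a^i * (1-a)^(j+1)))) \<partial>lborel)"
    by (intro nn_integral_cong) (auto simp: indicator_def mult_ac)
  also have "\<dots> = ennreal (betaC j 0 * betaC i (j+1))"
    using beta_nn[of "betaC j 0" 1 i "j+1"] less_imp_le[OF betaC_pos] by simp
  also have "betaC j 0 * betaC i (j+1) = fact i * fact j / fact (i+j+2)"
  proof -
    have e: "j+0+1 = j+1" "i+(j+1)+1 = i+j+2" by simp_all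
    have p: "(fact (j+1)::real) \<noteq> 0" "(fact (i+j+2)::real) \<noteq> 0" by simp_all
    show ?thesis unfolding betaC_def e using p
      by (simp only: fact_0 mult_1_right divide_inverse) (simp add: field_simps del: fact_Suc)
  qed
  finally show ?thesis .
qed

lemma mono2:
  "((\<lambda>x. x$1^i * x$2^j) has_integral (fact i * fact j / fact (i+j+2))) S2T"
  by (rule nn_to_hk[OF S2T_compact _ _ _ mono2_nn]) (auto simp: S2T_def intro!: continuous_intros)

lemma poly3:
  "((\<lambda>p. a0 + a1*p$1 + a2*p$2 + a3*p$3 + b11*(p$1)^2 + b22*(p$2)^2 + b33*(p$3)^2
        + b12*(p$1*p$2) + b13*(p$1*p$3) + b23*(p$2*p$3)) has_integral
     (a0/6 + (a1+a2+a3)/24 + (b11+b22+b33)/60 + (b12+b13+b23)/120)) S3"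
proof -
  have h: "((\<lambda>p. a0 * (p$1^0*p$2^0*p$3^0) + a1 * (p$1^1*p$2^0*p$3^0) + a2 * (p$1^0*p$2^1*p$3^0) + a3 * (p$1^0*p$2^0*p$3^1) + b11 * (p$1^2*p$2^0*p$3^0) + b22 * (p$1^0*p$2^2*p$3^0) + b33 * (p$1^0*p$2^0*p$3^2) + b12 * (p$1^1*p$2^1*p$3^0) + b13 * (p$1^1*p$2^0*p$3^1) + b23 * (p$1^0*p$2^1*p$3^1)) has_integral (a0 * (fact 0 * fact 0 * fact 0 / fact (0+0+0+3)) + a1 * (fact 1 * fact 0 * fact 0 / fact (1+0+0+3)) + a2 * (fact 0 * fact 1 * fact 0 / fact (0+1+0+3)) + a3 * (fact 0 * fact 0 * fact 1 / fact (0+0+1+3)) + b11 * (fact 2 * fact 0 * fact 0 / fact (2+0+0+3)) + b22 * (fact 0 * fact 2 * fact 0 / fact (0+2+0+3)) + b33 * (fact 0 * fact 0 * fact 2 / fact (0+0+2+3)) + b12 * (fact 1 * fact 1 * fact 0 / fact (1+1+0+3)) + b13 * (fact 1 * fact 0 * fact 1 / fact (1+0+1+3)) + b23 * (fact 0 * fact 1 * fact 1 / fact (0+1+1+3)))) S3"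
    by (intro has_integral_add has_integral_mult_right mono3)
  have v: "a0 * (fact 0 * fact 0 * fact 0 / fact (0+0+0+3)) + a1 * (fact 1 * fact 0 * fact 0 / fact (1+0+0+3)) + a2 * (fact 0 * fact 1 * fact 0 / fact (0+1+0+3)) + a3 * (fact 0 * fact 0 * fact 1 / fact (0+0+1+3)) + b11 * (fact 2 * fact 0 * fact 0 / fact (2+0+0+3)) + b22 * (fact 0 * fact 2 * fact 0 / fact (0+2+0+3)) + b33 * (fact 0 * fact 0 * fact 2 / fact (0+0+2+3)) + b12 * (fact 1 * fact 1 * fact 0 / fact (1+1+0+3)) + b13 * (fact 1 * fact 0 * fact 1 / fact (1+0+1+3)) + b23 * (fact 0 * fact 1 * fact 1 / fact (0+1+1+3)) = a0/6 + (a1+a2+a3)/24 + (b11+b22+b33)/60 + (b12+b13+b23)/120"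
    by (simp add: eval_nat_numeral add_divide_distrib)
  have f: "(\<lambda>p. a0 * (p$1^0*p$2^0*p$3^0) + a1 * (p$1^1*p$2^0*p$3^0) + a2 * (p$1^0*p$2^1*p$3^0) + a3 * (p$1^0*p$2^0*p$3^1) + b11 * (p$1^2*p$2^0*p$3^0) + b22 * (p$1^0*p$2^2*p$3^0) + b33 * (p$1^0*p$2^0*p$3^2) + b12 * (p$1^1*p$2^1*p$3^0) + b13 * (p$1^1*p$2^0*p$3^1) + b23 * (p$1^0*p$2^1*p$3^1)) = (\<lambda>p. a0 + a1*p$1 + a2*p$2 + a3*p$3 + b11*(p$1)^2 + b22*(p$2)^2 + b33*(p$3)^2
        + b12*(p$1*p$2) + b13*(p$1*p$3) + b23*(p$2*p$3))"
    by (simp add: fun_eq_iff)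
  from h show ?thesis unfolding v f .
qed

lemma poly2:
  "((\<lambda>p. a0 + a1*p$1 + a2*p$2 + b11*(p$1)^2 + b22*(p$2)^2 + b12*(p$1*p$2)) has_integral
     (a0/2 + (a1+a2)/6 + (b11+b22)/12 + b12/24)) S2T"
proof -
  have h: "((\<lambda>p. a0 * (p$1^0*p$2^0) + a1 * (p$1^1*p$2^0) + a2 * (p$1^0*p$2^1) + b11 * (p$1^2*p$2^0) + b22 * (p$1^0*p$2^2) + b12 * (p$1^1*p$2^1)) has_integral (a0 * (fact 0 * fact 0 / fact (0+0+2)) + a1 * (fact 1 * fact 0 / fact (1+0+2)) + a2 * (fact 0 * fact 1 / fact (0+1+2)) + b11 * (fact 2 * fact 0 / fact (2+0+2)) + b22 * (fact 0 * fact 2 / fact (0+2+2)) + b12 * (fact 1 * fact 1 / fact (1+1+2)))) S2T"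
    by (intro has_integral_add has_integral_mult_right mono2)
  have v: "a0 * (fact 0 * fact 0 / fact (0+0+2)) + a1 * (fact 1 * fact 0 / fact (1+0+2)) + a2 * (fact 0 * fact 1 / fact (0+1+2)) + b11 * (fact 2 * fact 0 / fact (2+0+2)) + b22 * (fact 0 * fact 2 / fact (0+2+2)) + b12 * (fact 1 * fact 1 / fact (1+1+2)) = a0/2 + (a1+a2)/6 + (b11+b22)/12 + b12/24"
    by (simp add: eval_nat_numeral add_divide_distrib)
  have f: "(\<lambda>p. a0 * (p$1^0*p$2^0) + a1 * (p$1^1*p$2^0) + a2 * (p$1^0*p$2^1) + b11 * (p$1^2*p$2^0) + b22 * (p$1^0*p$2^2) + b12 * (p$1^1*p$2^1)) = (\<lambda>p. a0 + a1*p$1 + a2*p$2 + b11*(p$1)^2 + b22*(p$2)^2 + b12*(p$1*p$2))"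
    by (simp add: fun_eq_iff)
  from h show ?thesis unfolding v f .
qed

lemma vol_id:
  fixes x1 x2 x3 x4 xT :: "real^3"
  assumes "xT = (1/4) *\<^sub>R (x1 + x2 + x3 + x4)"
  shows "(norm (x1 - xT))\<^sup>2/6 + (2*((x1-xT)\<bullet>(x2-x1)) + 2*((x1-xT)\<bullet>(x3-x1)) + 2*((x1-xT)\<bullet>(x4-x1)))/24
     + ((norm (x2-x1))\<^sup>2 + (norm (x3-x1))\<^sup>2 + (norm (x4-x1))\<^sup>2)/60
     + (2*((x2-x1)\<bullet>(x3-x1)) + 2*((x2-x1)\<bullet>(x4-x1)) + 2*((x3-x1)\<bullet>(x4-x1)))/120
     = ((norm (x1 - xT))\<^sup>2 + (norm (x2 - xT))\<^sup>2 + (norm (x3 - xT))\<^sup>2 + (norm (x4 - xT))\<^sup>2)/120"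
  unfolding assms power2_norm_eq_inner inner_vec_def sum_3
  by (simp add: field_simps power2_eq_square)

lemma face_id:
  fixes a b c d xT :: "real^3"
  assumes "xT = (1/4) *\<^sub>R (a + b + c + d)"
  shows "((norm (a - xT))\<^sup>2 + (norm (b - xT))\<^sup>2 + (norm (c - xT))\<^sup>2 + (norm (d - xT))\<^sup>2 - 12 * (norm (a - xT))\<^sup>2)/2
     + ((-24*((a-xT)\<bullet>(b-a))) + (-24*((a-xT)\<bullet>(c-a))))/6
     + ((-12*(norm (b-a))\<^sup>2) + (-12*(norm (c-a))\<^sup>2))/12
     + (-24*((b-a)\<bullet>(c-a)))/24 = 0"
  unfolding assms power2_norm_eq_inner inner_vec_def sum_3
  by (simp add: field_simps power2_eq_square)

lemma expand3:
  fixes u v1 v2 v3 :: "real^3"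
  shows "(norm (u + p1 *\<^sub>R v1 + p2 *\<^sub>R v2 + p3 *\<^sub>R v3))\<^sup>2 =
    (norm u)\<^sup>2 + (2*(u\<bullet>v1))*p1 + (2*(u\<bullet>v2))*p2 + (2*(u\<bullet>v3))*p3 + (norm v1)\<^sup>2*p1^2 + (norm v2)\<^sup>2*p2^2 + (norm v3)\<^sup>2*p3^2
    + (2*(v1\<bullet>v2))*(p1*p2) + (2*(v1\<bullet>v3))*(p1*p3) + (2*(v2\<bullet>v3))*(p2*p3)"
  unfolding power2_norm_eq_inner
  by (simp add: inner_add_left inner_add_right inner_commute algebra_simps power2_eq_square)

lemma cc_int_vec:
  fixes f :: "'a::euclidean_space \<Rightarrow> 'b::euclidean_space"
  assumes "compact S" "continuous_on S f"
  shows "f absolutely_integrable_on S"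
proof -
  have m: "(\<lambda>x. indicator S x *\<^sub>R f x) \<in> lborel \<rightarrow>\<^sub>M borel"
    using borel_measurable_continuous_on_indicator[OF borel_compact[OF assms(1)] assms(2)] by simp
  have "integrable lborel (\<lambda>x. indicator S x *\<^sub>R f x)"
    by (rule borel_integrable_compact[OF assms])
  then have "integrable lebesgue (\<lambda>x. indicator S x *\<^sub>R f x)"
    using integrable_completion[OF m] by simp
  then show ?thesis by (simp add: set_integrable_def)
qed

lemma cov3:
  fixes \<psi> :: "real^3 \<Rightarrow> real" and g :: "real^3 \<Rightarrow> real^3"
  assumes cont: "continuous_on UNIV \<psi>" and lin: "linear g" and inj: "inj g"
  shows "integral ((\<lambda>p. c + g p) ` S3) \<psi> = \<bar>det (matrix g)\<bar> * integral S3 (\<lambda>p. \<psi> (c + g p))"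
proof -
  define F where "F x = \<psi> x *\<^sub>R (1::real^1)" for x
  have Fc: "F x $ 1 = \<psi> x" for x by (simp add: F_def)
  have contF: "continuous_on UNIV F" unfolding F_def by (intro continuous_intros cont)
  have contg: "continuous_on UNIV (\<lambda>p. c + g p)"
    using lin by (intro continuous_intros linear_continuous_on linear_conv_bounded_linear[THEN iffD1])
  have cpt: "compact ((\<lambda>p. c + g p) ` S3)"
    by (rule compact_continuous_image[OF continuous_on_subset[OF contg] S3_compact]) auto
  have FI: "F absolutely_integrable_on ((\<lambda>p. c + g p) ` S3)"
    by (rule cc_int_vec[OF cpt continuous_on_subset[OF contF]]) auto
  have der: "((\<lambda>p. c + g p) has_derivative g) (at x within S3)" for x
    using linear_imp_has_derivative[OF lin] by (auto intro!: derivative_eq_intros)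
  have injo: "inj_on (\<lambda>p. c + g p) S3" using inj by (auto simp: inj_on_def inj_def)
  have S3l: "S3 \<in> sets lebesgue" using lmeasurable_compact[OF S3_compact] by (simp add: fmeasurableD)
  have eq: "integral ((\<lambda>p. c + g p) ` S3) F = integral S3 (\<lambda>x. \<bar>det (matrix g)\<bar> *\<^sub>R F (c + g x))"
    by (rule integral_change_of_variables[OF S3l der injo]) (use FI in auto)
  have I1: "F integrable_on ((\<lambda>p. c + g p) ` S3)"
    using FI set_lebesgue_integral_eq_integral(1) by blast
  have contFg: "continuous_on UNIV (\<lambda>x. \<bar>det (matrix g)\<bar> *\<^sub>R F (c + g x))"
    by (intro continuous_intros continuous_on_compose2[OF contF contg]) auto
  have I2: "(\<lambda>x. \<bar>det (matrix g)\<bar> *\<^sub>R F (c + g x)) integrable_on S3"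
    using cc_int_vec[OF S3_compact continuous_on_subset[OF contFg]] set_lebesgue_integral_eq_integral(1) by blast
  have "integral ((\<lambda>p. c + g p) ` S3) \<psi> = integral ((\<lambda>p. c + g p) ` S3) (\<lambda>x. F x $ 1)"
    by (simp add: Fc)
  also have "\<dots> = integral ((\<lambda>p. c + g p) ` S3) F $ 1"
    by (rule integral_component_eq_cart[OF I1])
  also have "\<dots> = integral S3 (\<lambda>x. \<bar>det (matrix g)\<bar> *\<^sub>R F (c + g x)) $ 1" by (simp only: eq)
  also have "\<dots> = integral S3 (\<lambda>x. (\<bar>det (matrix g)\<bar> *\<^sub>R F (c + g x)) $ 1)"
    by (rule integral_component_eq_cart[OF I2, symmetric])
  also have "\<dots> = integral S3 (\<lambda>x. \<bar>det (matrix g)\<bar> * \<psi> (c + g x))"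
    by (simp add: Fc)
  also have "\<dots> = \<bar>det (matrix g)\<bar> * integral S3 (\<lambda>p. \<psi> (c + g p))"
    by simp
  finally show ?thesis .
qed

lemma S3_hull: "S3 = convex hull (insert 0 Basis)"
  unfolding std_simplex S3_def sum_Basis3 by (auto simp: Basis3 inner_axis)

lemma S2T_ref: "ref_triangle = S2T"
  unfolding ref_triangle_def S2T_def ..


lemma expand2:
  fixes u v1 v2 :: "real^3"
  shows "(norm (u + p1 *\<^sub>R v1 + p2 *\<^sub>R v2))\<^sup>2 =
    (norm u)\<^sup>2 + (2*(u\<bullet>v1))*p1 + (2*(u\<bullet>v2))*p2 + (norm v1)\<^sup>2*p1^2 + (norm v2)\<^sup>2*p2^2
    + (2*(v1\<bullet>v2))*(p1*p2)"
  unfolding power2_norm_eq_inner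
  by (simp add: inner_add_left inner_add_right inner_commute algebra_simps power2_eq_square)

lemma face_zero:
  fixes a b c d xT :: "real^3"
  assumes xT: "xT = (1/4) *\<^sub>R (a + b + c + d)"
    and L: "L = (norm (a - xT))\<^sup>2 + (norm (b - xT))\<^sup>2 + (norm (c - xT))\<^sup>2 + (norm (d - xT))\<^sup>2"
  shows "integral ref_triangle (\<lambda>p. L - 12 * (norm ((a + (p$1) *\<^sub>R (b - a) + (p$2) *\<^sub>R (c - a)) - xT))\<^sup>2) = 0"
proof -
  note h = poly2[of "L - 12*(norm (a-xT))\<^sup>2" "-24*((a-xT)\<bullet>(b-a))" "-24*((a-xT)\<bullet>(c-a))"
      "-12*(norm (b-a))\<^sup>2" "-12*(norm (c-a))\<^sup>2" "-24*((b-a)\<bullet>(c-a))"]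
  have f: "(\<lambda>p::real^2. L - 12 * (norm ((a + (p$1) *\<^sub>R (b - a) + (p$2) *\<^sub>R (c - a)) - xT))\<^sup>2) =
     (\<lambda>p::real^2. (L - 12*(norm (a-xT))\<^sup>2) + (-24*((a-xT)\<bullet>(b-a)))*p$1 + (-24*((a-xT)\<bullet>(c-a)))*p$2
        + (-12*(norm (b-a))\<^sup>2)*(p$1)^2 + (-12*(norm (c-a))\<^sup>2)*(p$2)^2 + (-24*((b-a)\<bullet>(c-a)))*(p$1*p$2))"
  proof
    fix p :: "real^2"
    have "(a + (p$1) *\<^sub>R (b - a) + (p$2) *\<^sub>R (c - a)) - xT = (a - xT) + (p$1) *\<^sub>R (b - a) + (p$2) *\<^sub>R (c - a)"
      by (simp add: algebra_simps)
    then show "L - 12 * (norm ((a + (p$1) *\<^sub>R (b - a) + (p$2) *\<^sub>R (c - a)) - xT))\<^sup>2 =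
       (L - 12*(norm (a-xT))\<^sup>2) + (-24*((a-xT)\<bullet>(b-a)))*p$1 + (-24*((a-xT)\<bullet>(c-a)))*p$2
        + (-12*(norm (b-a))\<^sup>2)*(p$1)^2 + (-12*(norm (c-a))\<^sup>2)*(p$2)^2 + (-24*((b-a)\<bullet>(c-a)))*(p$1*p$2)"
      by (simp only: expand2) (simp add: algebra_simps)
  qed
  have "integral ref_triangle (\<lambda>p. L - 12 * (norm ((a + (p$1) *\<^sub>R (b - a) + (p$2) *\<^sub>R (c - a)) - xT))\<^sup>2)
     = (L - 12*(norm (a-xT))\<^sup>2)/2 + ((-24*((a-xT)\<bullet>(b-a))) + (-24*((a-xT)\<bullet>(c-a))))/6
     + ((-12*(norm (b-a))\<^sup>2) + (-12*(norm (c-a))\<^sup>2))/12 + (-24*((b-a)\<bullet>(c-a)))/24"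
    unfolding f S2T_ref using h by (rule integral_unique)
  also have "\<dots> = 0" unfolding L using face_id[OF xT] .
  finally show ?thesis .
qed

lemma tet_main:
  fixes x1 x2 x3 x4 xT :: "real^3" and L :: real
  assumes tet: "distinct [x1, x2, x3, x4]" "\<not> affine_dependent {x1, x2, x3, x4}"
    and xT_def: "xT = (1/4) *\<^sub>R (x1 + x2 + x3 + x4)"
    and L_def: "L = (norm (x1 - xT))\<^sup>2 + (norm (x2 - xT))\<^sup>2 + (norm (x3 - xT))\<^sup>2 + (norm (x4 - xT))\<^sup>2"
  shows "\<exists>D>0. \<forall>\<alpha> \<beta>. integral (convex hull {x1, x2, x3, x4}) (\<lambda>x. \<alpha> + \<beta> * (norm (x - xT))\<^sup>2) = D * (\<alpha>/6 + \<beta>*L/120)"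
proof -
  define g where "g p = p$1 *\<^sub>R (x2-x1) + p$2 *\<^sub>R (x3-x1) + p$3 *\<^sub>R (x4-x1)" for p :: "real^3"
  have lin: "linear g"
    unfolding linear_iff g_def by (auto simp: algebra_simps)
  have inj: "inj g"
  proof (rule ccontr)
    assume "\<not> inj g"
    then obtain p where p: "g p = 0" "p \<noteq> 0"
      using linear_injective_0[OF lin] by blast
    define U where "U v = (if v = x2 then p$1 else if v = x3 then p$2 else if v = x4 then p$3 else -(p$1+p$2+p$3))" for v
    have "sum U {x1,x2,x3,x4} = 0" "sum (\<lambda>v. U v *\<^sub>R v) {x1,x2,x3,x4} = 0"
      using tet(1) p(1) by (auto simp: U_def g_def algebra_simps)
    moreover have "\<exists>v\<in>{x1,x2,x3,x4}. U v \<noteq> 0"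
    proof -
      from p(2) obtain i where "p$i \<noteq> 0" by (auto simp: vec_eq_iff)
      then have "p$1 \<noteq> 0 \<or> p$2 \<noteq> 0 \<or> p$3 \<noteq> 0" using exhaust_3[of i] by auto
      then show ?thesis using tet(1) by (auto simp: U_def)
    qed
    ultimately have "affine_dependent {x1,x2,x3,x4}"
      by (subst affine_dependent_explicit_finite) auto
    with tet(2) show False by simp
  qed
  have det: "det (matrix g) \<noteq> 0" using det_nz_iff_inj[OF lin] inj by simp
  have hull: "convex hull {x1, x2, x3, x4} = (\<lambda>p. x1 + g p) ` S3"
  proof -
    have "(\<lambda>p. x1 + g p) ` S3 = (+) x1 ` (g ` (convex hull (insert 0 Basis)))"
      unfolding S3_hull by (simp add: image_image)
    also have "g ` (convex hull (insert 0 Basis)) = convex hull (g ` insert 0 Basis)"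
      by (rule convex_hull_linear_image[OF lin])
    also have "g ` insert 0 Basis = {0, x2-x1, x3-x1, x4-x1}"
      by (auto simp: Basis3 g_def axis_def)
    also have "(+) x1 ` (convex hull {0, x2-x1, x3-x1, x4-x1}) = convex hull ((+) x1 ` {0, x2-x1, x3-x1, x4-x1})"
      by (rule convex_hull_translation[symmetric])
    also have "(+) x1 ` {0, x2-x1, x3-x1, x4-x1} = {x1, x2, x3, x4}"
      by auto
    finally show ?thesis by simp
  qed
  have key: "integral (convex hull {x1, x2, x3, x4}) (\<lambda>x. \<alpha> + \<beta> * (norm (x - xT))\<^sup>2) = \<bar>det (matrix g)\<bar> * (\<alpha>/6 + \<beta>*L/120)" for \<alpha> \<beta>
  proof -
    have c: "continuous_on UNIV (\<lambda>x. \<alpha> + \<beta> * (norm (x - xT))\<^sup>2)"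
      by (intro continuous_intros)
    note h = poly3[of "\<alpha> + \<beta>*(norm (x1-xT))\<^sup>2" "\<beta>*(2*((x1-xT)\<bullet>(x2-x1)))" "\<beta>*(2*((x1-xT)\<bullet>(x3-x1)))" "\<beta>*(2*((x1-xT)\<bullet>(x4-x1)))"
       "\<beta>*(norm (x2-x1))\<^sup>2" "\<beta>*(norm (x3-x1))\<^sup>2" "\<beta>*(norm (x4-x1))\<^sup>2"
       "\<beta>*(2*((x2-x1)\<bullet>(x3-x1)))" "\<beta>*(2*((x2-x1)\<bullet>(x4-x1)))" "\<beta>*(2*((x3-x1)\<bullet>(x4-x1)))"]
    have f: "(\<lambda>p. \<alpha> + \<beta> * (norm (x1 + g p - xT))\<^sup>2) = (\<lambda>p. (\<alpha> + \<beta>*(norm (x1-xT))\<^sup>2) + (\<beta>*(2*((x1-xT)\<bullet>(x2-x1))))*p$1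
       + (\<beta>*(2*((x1-xT)\<bullet>(x3-x1))))*p$2 + (\<beta>*(2*((x1-xT)\<bullet>(x4-x1))))*p$3
       + (\<beta>*(norm (x2-x1))\<^sup>2)*(p$1)^2 + (\<beta>*(norm (x3-x1))\<^sup>2)*(p$2)^2 + (\<beta>*(norm (x4-x1))\<^sup>2)*(p$3)^2
       + (\<beta>*(2*((x2-x1)\<bullet>(x3-x1))))*(p$1*p$2) + (\<beta>*(2*((x2-x1)\<bullet>(x4-x1))))*(p$1*p$3) + (\<beta>*(2*((x3-x1)\<bullet>(x4-x1))))*(p$2*p$3))"
    proof
      fix p :: "real^3"
      have "x1 + g p - xT = (x1 - xT) + p$1 *\<^sub>R (x2-x1) + p$2 *\<^sub>R (x3-x1) + p$3 *\<^sub>R (x4-x1)"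
        by (simp add: g_def algebra_simps)
      then show "\<alpha> + \<beta> * (norm (x1 + g p - xT))\<^sup>2 = (\<alpha> + \<beta>*(norm (x1-xT))\<^sup>2) + (\<beta>*(2*((x1-xT)\<bullet>(x2-x1))))*p$1
       + (\<beta>*(2*((x1-xT)\<bullet>(x3-x1))))*p$2 + (\<beta>*(2*((x1-xT)\<bullet>(x4-x1))))*p$3
       + (\<beta>*(norm (x2-x1))\<^sup>2)*(p$1)^2 + (\<beta>*(norm (x3-x1))\<^sup>2)*(p$2)^2 + (\<beta>*(norm (x4-x1))\<^sup>2)*(p$3)^2
       + (\<beta>*(2*((x2-x1)\<bullet>(x3-x1))))*(p$1*p$2) + (\<beta>*(2*((x2-x1)\<bullet>(x4-x1))))*(p$1*p$3) + (\<beta>*(2*((x3-x1)\<bullet>(x4-x1))))*(p$2*p$3)"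
        by (simp only: expand3) (simp add: algebra_simps)
    qed
    have "integral S3 (\<lambda>p. \<alpha> + \<beta> * (norm (x1 + g p - xT))\<^sup>2) =
       (\<alpha> + \<beta>*(norm (x1-xT))\<^sup>2)/6 + (\<beta>*(2*((x1-xT)\<bullet>(x2-x1))) + \<beta>*(2*((x1-xT)\<bullet>(x3-x1))) + \<beta>*(2*((x1-xT)\<bullet>(x4-x1))))/24
       + (\<beta>*(norm (x2-x1))\<^sup>2 + \<beta>*(norm (x3-x1))\<^sup>2 + \<beta>*(norm (x4-x1))\<^sup>2)/60
       + (\<beta>*(2*((x2-x1)\<bullet>(x3-x1))) + \<beta>*(2*((x2-x1)\<bullet>(x4-x1))) + \<beta>*(2*((x3-x1)\<bullet>(x4-x1))))/120"
      unfolding f using h by (rule integral_unique)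
    also have "\<dots> = \<alpha>/6 + \<beta> * ((norm (x1 - xT))\<^sup>2/6 + (2*((x1-xT)\<bullet>(x2-x1)) + 2*((x1-xT)\<bullet>(x3-x1)) + 2*((x1-xT)\<bullet>(x4-x1)))/24
     + ((norm (x2-x1))\<^sup>2 + (norm (x3-x1))\<^sup>2 + (norm (x4-x1))\<^sup>2)/60
     + (2*((x2-x1)\<bullet>(x3-x1)) + 2*((x2-x1)\<bullet>(x4-x1)) + 2*((x3-x1)\<bullet>(x4-x1)))/120)"
      by (simp add: field_simps)
    also have "\<dots> = \<alpha>/6 + \<beta>*L/120"
      unfolding vol_id[OF xT_def] L_def by simp
    finally have i: "integral S3 (\<lambda>p. \<alpha> + \<beta> * (norm (x1 + g p - xT))\<^sup>2) = \<alpha>/6 + \<beta>*L/120" .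
    show ?thesis unfolding hull cov3[OF c lin inj] i ..
  qed
  show ?thesis
    by (rule exI[of _ "\<bar>det (matrix g)\<bar>"]) (use det key in auto)
qed

theorem lemma11:
  fixes x1 x2 x3 x4 :: "real^3" and xT :: "real^3" and L :: real
    and T :: "(real^3) set" and \<phi> :: "real^3 \<Rightarrow> real"
  assumes tet: "distinct [x1, x2, x3, x4]" "\<not> affine_dependent {x1, x2, x3, x4}"
    and T_def: "T = convex hull {x1, x2, x3, x4}"
    and xT_def: "xT = (1/4) *\<^sub>R (x1 + x2 + x3 + x4)"
    and L_def: "L = (norm (x1 - xT))\<^sup>2 + (norm (x2 - xT))\<^sup>2 + (norm (x3 - xT))\<^sup>2 + (norm (x4 - xT))\<^sup>2"
    and phi_def: "\<And>x. \<phi> x = L - 12 * (norm (x - xT))\<^sup>2"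
  shows "tri_surface_integral \<phi> x2 x3 x4 / tri_area x2 x3 x4 = 0
       \<and> tri_surface_integral \<phi> x1 x3 x4 / tri_area x1 x3 x4 = 0
       \<and> tri_surface_integral \<phi> x1 x2 x4 / tri_area x1 x2 x4 = 0
       \<and> tri_surface_integral \<phi> x1 x2 x3 / tri_area x1 x2 x3 = 0
       \<and> integral T \<phi> / measure lebesgue T = (2/5) * L
       \<and> integral T (\<lambda>x. (norm (grad \<phi> x))\<^sup>2) / measure lebesgue T = (144/5) * L"
proof -
  have phi: "\<phi> = (\<lambda>x. L - 12 * (norm (x - xT))\<^sup>2)" by (rule ext) (rule phi_def)
  have F1: "tri_surface_integral \<phi> x2 x3 x4 = 0"
    unfolding tri_surface_integral_def phi
    by (subst face_zero[where d=x1]) (use xT_def L_def in \<open>simp_all add: add_ac\<close>)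
  have F2: "tri_surface_integral \<phi> x1 x3 x4 = 0"
    unfolding tri_surface_integral_def phi
    by (subst face_zero[where d=x2]) (use xT_def L_def in \<open>simp_all add: add_ac\<close>)
  have F3: "tri_surface_integral \<phi> x1 x2 x4 = 0"
    unfolding tri_surface_integral_def phi
    by (subst face_zero[where d=x3]) (use xT_def L_def in \<open>simp_all add: add_ac\<close>)
  have F4: "tri_surface_integral \<phi> x1 x2 x3 = 0"
    unfolding tri_surface_integral_def phi
    by (subst face_zero[where d=x4]) (use xT_def L_def in \<open>simp_all add: add_ac\<close>)
  obtain D where D: "D > 0" and key: "\<And>\<alpha> \<beta>. integral T (\<lambda>x. \<alpha> + \<beta> * (norm (x - xT))\<^sup>2) = D * (\<alpha>/6 + \<beta>*L/120)"
    using tet_main[OF tet xT_def L_def] unfolding T_def[symmetric] by blast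
  have Tl: "T \<in> lmeasurable"
    unfolding T_def by (intro lmeasurable_compact finite_imp_compact_convex_hull) auto
  have meas: "measure lebesgue T = D/6"
    using key[of 1 0] lmeasure_integral[OF Tl] by simp
  have I1: "integral T \<phi> = D * (L/6 + (-12)*L/120)"
    unfolding phi using key[of L "-12"] by simp
  have grad: "grad \<phi> x = (-24) *\<^sub>R (x - xT)" for x
  proof -
    have d: "(\<phi> has_derivative (\<lambda>h. -24 * ((x - xT) \<bullet> h))) (at x)"
      unfolding phi power2_norm_eq_inner
      by (auto intro!: derivative_eq_intros simp: inner_commute algebra_simps)
    show ?thesis
      unfolding grad_def frechet_derivative_at[OF d, symmetric]
      by (simp add: vec_eq_iff inner_axis)
  qed
  have I2: "integral T (\<lambda>x. (norm (grad \<phi> x))\<^sup>2) = D * (0/6 + 576*L/120)"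
  proof -
    have "(\<lambda>x. (norm (grad \<phi> x))\<^sup>2) = (\<lambda>x. 0 + 576 * (norm (x - xT))\<^sup>2)"
      by (rule ext) (simp add: grad power_mult_distrib)
    then show ?thesis using key[of 0 576] by simp
  qed
  show ?thesis
    using F1 F2 F3 F4 D unfolding meas I1 I2 by (simp add: field_simps)
qed

end
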